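(* Let $G$ be a finite simple graph of order $p$ and size $q$ with $p\geq 4$ and $q\geq p+1$. Then $G$ contains either a cycle of even length or two edge-disjoint cycles of odd length. *)

theory Defs
  imports Main
begin

definition simple_graph :: "'a set \<Rightarrow> 'a set set \<Rightarrow> bool" where
  "simple_graph V E \<longleftrightarrow> finite V \<and>
     (\<forall>e\<in>E. \<exists>u v. u \<in> V \<and> v \<in> V \<and> u \<noteq> v \<and> e = {u, v})"

definition is_cycle :: "'a set \<Rightarrow> 'a set set \<Rightarrow> 'a list \<Rightarrow> bool" where
  "is_cycle V E vs \<longleftrightarrow> 3 \<le> length vs \<and> distinct vs \<and> set vs \<subseteq> V \<and>
     (\<forall>i < length vs. {vs ! i, vs ! ((i + 1) mod length vs)} \<in> E)"

definition cycle_edges :: "'a list \<Rightarrow> 'a set set" where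
  "cycle_edges vs = {{vs ! i, vs ! ((i + 1) mod length vs)} | i. i < length vs}"

end

theory Submission
  imports Defs
begin

definition edge_at :: "'a list \<Rightarrow> nat \<Rightarrow> 'a set" where
  "edge_at vs i = {vs ! i, vs ! ((i + 1) mod length vs)}"

definition inc :: "'a set set \<Rightarrow> 'a \<Rightarrow> 'a set set" where
  "inc D x = {e\<in>D. x \<in> e}"

lemma cycle_edges_img: "cycle_edges vs = edge_at vs ` {..<length vs}"
  unfolding cycle_edges_def edge_at_def by auto

lemma is_cycle_iff: "is_cycle V E vs \<longleftrightarrow> 3 \<le> length vs \<and> distinct vs \<and> set vs \<subseteq> V \<and> cycle_edges vs \<subseteq> E"
  unfolding is_cycle_def cycle_edges_img edge_at_def by auto

lemma mod_pred_aux: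
  fixes i j n :: nat
  assumes "i < n" "j = (i+1) mod n"
  shows "i = (j + n - 1) mod n"
proof (cases "i + 1 < n")
  case True
  then have "j = i + 1" using assms by simp
  then have "j + n - 1 = i + n" by simp
  then show ?thesis using assms(1) by simp
next
  case False then have "i + 1 = n" using assms by simp
  then show ?thesis using assms by simp
qed

lemma mod_succ_aux:
  fixes j n :: nat
  assumes "j < n"
  shows "((j + n - 1) mod n + 1) mod n = j"
proof -
  have "n \<ge> 1" using assms by linarith
  have "((j + n - 1) mod n + 1) mod n = ((j + n - 1) + 1) mod n" by (simp add: mod_Suc_eq)
  also have "\<dots> = (j + n) mod n" using \<open>n \<ge> 1\<close> by simp
  also have "\<dots> = j" using assms by simp
  finally show ?thesis .
qed

lemma edge_at_inj:
  assumes "3 \<le> length vs" "distinct vs"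
  shows "inj_on (edge_at vs) {..<length vs}"
proof
  fix i i' assume i: "i \<in> {..<length vs}" and i': "i' \<in> {..<length vs}" and eq: "edge_at vs i = edge_at vs i'"
  let ?n = "length vs"
  have n0: "?n > 0" using assms(1) by linarith
  have ii: "(i+1) mod ?n < ?n" "(i'+1) mod ?n < ?n" using n0 by auto
  from eq have "(vs!i = vs!i' \<and> vs!((i+1) mod ?n) = vs!((i'+1) mod ?n)) \<or>
     (vs!i = vs!((i'+1) mod ?n) \<and> vs!((i+1) mod ?n) = vs!i')"
    unfolding edge_at_def by (simp add: doubleton_eq_iff)
  then show "i = i'"
  proof
    assume "vs!i = vs!i' \<and> vs!((i+1) mod ?n) = vs!((i'+1) mod ?n)"
    then show ?thesis using i i' assms(2) by (simp add: nth_eq_iff_index_eq)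
  next
    assume "vs!i = vs!((i'+1) mod ?n) \<and> vs!((i+1) mod ?n) = vs!i'"
    then have h1: "vs!i = vs!((i'+1) mod ?n)" and h2: "vs!((i+1) mod ?n) = vs!i'" by auto
    have a: "i = (i'+1) mod ?n"
      using h1 i ii assms(2) by (simp add: nth_eq_iff_index_eq)
    have b: "i' = (i+1) mod ?n"
      using h2 i' ii assms(2) by (simp add: nth_eq_iff_index_eq)
    show ?thesis
    proof (cases "i' + 1 < ?n")
      case True
      then have "i = i' + 1" using a by simp
      have "i + 1 = i' + 2" using \<open>i = i' + 1\<close> by simp
      then have c: "i' = (i' + 2) mod ?n" using b by metis
      show ?thesis
      proof (cases "i' + 2 < ?n")
        case True
        then have "(i' + 2) mod ?n = i' + 2" by simp
        then show ?thesis using c by linarith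
      next
        case False
        then have "i' + 2 = ?n" using \<open>i' + 1 < ?n\<close> by simp
        then have "(i' + 2) mod ?n = 0" by simp
        then have "i' = 0" using c by linarith
        then show ?thesis using \<open>i' + 2 = ?n\<close> assms(1) by simp
      qed
    next
      case False
      then have "i' + 1 = ?n" using i' by simp
      then have "i = 0" using a by simp
      then have "i' = 1" using b assms(1) by simp
      then show ?thesis using \<open>i' + 1 = ?n\<close> assms(1) by simp
    qed
  qed
qed

lemma card_cycle_edges:
  assumes "3 \<le> length vs" "distinct vs"
  shows "card (cycle_edges vs) = length vs"
  unfolding cycle_edges_img using card_image[OF edge_at_inj[OF assms]] by simp

lemma inc_cycle_in:
  assumes "3 \<le> length vs" "distinct vs" "j < length vs"
  shows "inc (cycle_edges vs) (vs!j) = edge_at vs ` {j, (j + length vs - 1) mod length vs}"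
proof -
  let ?n = "length vs"
  have n0: "?n > 0" using assms(1) by linarith
  show ?thesis
  proof
    show "inc (cycle_edges vs) (vs!j) \<subseteq> edge_at vs ` {j, (j + length vs - 1) mod length vs}"
    proof
      fix e assume "e \<in> inc (cycle_edges vs) (vs!j)"
      then obtain i where i: "i < ?n" "e = edge_at vs i" "vs!j \<in> e"
        unfolding inc_def cycle_edges_img by auto
      have "(i+1) mod ?n < ?n" using n0 by auto
      then have "vs!j = vs!i \<or> vs!j = vs!((i+1) mod ?n)" using i unfolding edge_at_def by auto
      then have "j = i \<or> j = (i+1) mod ?n" using i assms \<open>(i+1) mod ?n < ?n\<close>
        by (auto simp add: nth_eq_iff_index_eq)
      then have "i = j \<or> i = (j + ?n - 1) mod ?n" using mod_pred_aux[OF i(1)] by auto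
      then show "e \<in> edge_at vs ` {j, (j + length vs - 1) mod length vs}" using i by auto
    qed
  next
    show "edge_at vs ` {j, (j + length vs - 1) mod length vs} \<subseteq> inc (cycle_edges vs) (vs!j)"
    proof -
      have "edge_at vs j \<in> inc (cycle_edges vs) (vs!j)"
        using assms unfolding inc_def cycle_edges_img edge_at_def by auto
      moreover have "edge_at vs ((j + ?n - 1) mod ?n) \<in> inc (cycle_edges vs) (vs!j)"
        using assms n0 mod_succ_aux[OF assms(3)] unfolding inc_def cycle_edges_img edge_at_def by auto
      ultimately show ?thesis by auto
    qed
  qed
qed

lemma edge_at_subset:
  assumes "i < length vs"
  shows "edge_at vs i \<subseteq> set vs"
proof -
  have "length vs > 0" using assms by linarith
  then have "(i+1) mod length vs < length vs" by simp
  then show ?thesis using assms unfolding edge_at_def by auto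
qed

lemma inc_cycle_even:
  assumes "3 \<le> length vs" "distinct vs"
  shows "even (card (inc (cycle_edges vs) x))"
proof (cases "x \<in> set vs")
  case False
  then have "inc (cycle_edges vs) x = {}"
    unfolding inc_def cycle_edges_img using edge_at_subset by blast
  then show ?thesis by simp
next
  case True
  then obtain j where j: "j < length vs" "x = vs!j" by (metis in_set_conv_nth)
  let ?n = "length vs"
  have "j \<noteq> (j + ?n - 1) mod ?n"
  proof
    assume h: "j = (j + ?n - 1) mod ?n"
    have "(j + ?n - 1) mod ?n + 1 = j + 1" using h by simp
    have "((j + ?n - 1) mod ?n + 1) mod ?n = j" by (rule mod_succ_aux[OF j(1)])
    then have "(j+1) mod ?n = j" using h by simp
    show False
    proof (cases "j + 1 < ?n")
      case True then show False using \<open>(j+1) mod ?n = j\<close> by simp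
    next
      case False then have "j + 1 = ?n" using j(1) by simp
      then show False using \<open>(j+1) mod ?n = j\<close> assms(1) by simp
    qed
  qed
  moreover have "(j + ?n - 1) mod ?n < ?n"
  proof -
    have "?n > 0" using j(1) by linarith
    then show ?thesis by simp
  qed
  ultimately have "card (edge_at vs ` {j, (j + ?n - 1) mod ?n}) = card {j, (j + ?n - 1) mod ?n}"
    using card_image[OF inj_on_subset[OF edge_at_inj[OF assms]], of "{j, (j + ?n - 1) mod ?n}"] j by auto
  also have "\<dots> = 2" using \<open>j \<noteq> (j + ?n - 1) mod ?n\<close> by simp
  finally have "card (edge_at vs ` {j, (j + ?n - 1) mod ?n}) = 2" .
  then show ?thesis using inc_cycle_in[OF assms j(1)] j by simp
qed


definition is_path :: "'a set set \<Rightarrow> 'a list \<Rightarrow> bool" where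
  "is_path D ps \<longleftrightarrow> distinct ps \<and> 2 \<le> length ps \<and> set ps \<subseteq> \<Union>D \<and>
     (\<forall>i. Suc i < length ps \<longrightarrow> {ps ! i, ps ! Suc i} \<in> D)"

lemma cyc_mindeg:
  assumes fin: "finite D" and two: "\<forall>e\<in>D. \<exists>u v. u \<noteq> v \<and> e = {u, v}"
    and ne: "D \<noteq> {}" and deg: "\<forall>x\<in>\<Union>D. 2 \<le> card (inc D x)"
  shows "\<exists>vs. 3 \<le> length vs \<and> distinct vs \<and> set vs \<subseteq> \<Union>D \<and> cycle_edges vs \<subseteq> D"
proof -
  have finU: "finite (\<Union>D)"
  proof (rule finite_Union[OF fin])
    fix M assume "M \<in> D"
    then obtain u v where "M = {u, v}" using two by blast
    then show "finite M" by simp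
  qed
  let ?P = "{ps. is_path D ps}"
  have "?P \<subseteq> {xs. set xs \<subseteq> \<Union>D \<and> length xs \<le> card (\<Union>D)}"
  proof
    fix xs assume "xs \<in> ?P"
    then have d: "distinct xs" and s: "set xs \<subseteq> \<Union>D" unfolding is_path_def by auto
    have "length xs = card (set xs)" using distinct_card[OF d] by simp
    also have "\<dots> \<le> card (\<Union>D)" using card_mono[OF finU s] .
    finally show "xs \<in> {xs. set xs \<subseteq> \<Union>D \<and> length xs \<le> card (\<Union>D)}" using s by simp
  qed
  then have finP: "finite ?P" using finite_lists_length_le[OF finU] finite_subset by blast
  obtain e where "e \<in> D" using ne by auto
  then obtain u v where uv0: "u \<noteq> v" "e = {u, v}" using two by blast
  then have uv: "u \<noteq> v" "{u, v} \<in> D" using \<open>e \<in> D\<close> by auto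
  have "is_path D [u, v]" unfolding is_path_def
  proof (intro conjI allI impI)
    fix i assume "Suc i < length [u, v]"
    then have "i = 0" by simp
    then show "{[u, v] ! i, [u, v] ! Suc i} \<in> D" using uv by simp
  qed (use uv in auto)
  then have Pne: "?P \<noteq> {}" by auto
  define m where "m = Max (length ` ?P)"
  have "m \<in> length ` ?P" unfolding m_def using finP Pne by (intro Max_in) auto
  then obtain ps where ps: "is_path D ps" "length ps = m" by auto
  have maxp: "length qs \<le> m" if "is_path D qs" for qs
    unfolding m_def using finP that by (intro Max_ge) auto
  obtain x0 x1 rest where ps_eq: "ps = x0 # x1 # rest" using ps(1) unfolding is_path_def
    by (metis One_nat_def Suc_1 Suc_le_length_iff)
  have "\<forall>i. Suc i < length ps \<longrightarrow> {ps ! i, ps ! Suc i} \<in> D" using ps(1) unfolding is_path_def by blast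
  moreover have "Suc 0 < length ps" using ps_eq by simp
  ultimately have "{ps ! 0, ps ! Suc 0} \<in> D" by blast
  then have e01: "{x0, x1} \<in> D" using ps_eq by simp
  have x0U: "x0 \<in> \<Union>D" using ps(1) unfolding is_path_def ps_eq by auto
  have fin_inc: "finite (inc D x0)" using fin unfolding inc_def by auto
  have "{x0, x1} \<in> inc D x0" using e01 unfolding inc_def by auto
  moreover have "2 \<le> card (inc D x0)" using deg x0U by auto
  ultimately have "\<exists>e'\<in>inc D x0. e' \<noteq> {x0, x1}"
  proof -
    assume a1: "2 \<le> card (inc D x0)"
    show ?thesis
    proof (rule ccontr)
      assume "\<not> ?thesis"
      then have "inc D x0 \<subseteq> {{x0, x1}}" by blast
      then have "card (inc D x0) \<le> 1" using card_mono[of "{{x0, x1}}"] by fastforce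
      then show False using a1 by simp
    qed
  qed
  then obtain e' where e': "e' \<in> D" "x0 \<in> e'" "e' \<noteq> {x0, x1}" unfolding inc_def by auto
  then obtain a b where ab: "a \<noteq> b" "e' = {a, b}" using two by blast
  obtain y where y: "e' = {x0, y}" "y \<noteq> x0" using ab e'(2) by auto
  have yx1: "y \<noteq> x1" using y e'(3) by auto
  have yU: "y \<in> \<Union>D" using y e' by auto
  have "y \<in> set ps"
  proof (rule ccontr)
    assume "y \<notin> set ps"
    have "is_path D (y # ps)"
      unfolding is_path_def
    proof (intro conjI allI impI)
      show "distinct (y # ps)" using \<open>y \<notin> set ps\<close> ps(1) unfolding is_path_def by auto
      show "2 \<le> length (y # ps)" using ps(1) unfolding is_path_def by auto
      show "set (y # ps) \<subseteq> \<Union>D" using yU ps(1) unfolding is_path_def by auto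
      fix i assume i: "Suc i < length (y # ps)"
      show "{(y # ps) ! i, (y # ps) ! Suc i} \<in> D"
      proof (cases i)
        case 0 then show ?thesis using e' y ps_eq by (simp add: insert_commute)
      next
        case (Suc k) then show ?thesis using i ps(1) unfolding is_path_def by auto
      qed
    qed
    then have "length (y # ps) \<le> m" by (rule maxp)
    then show False using ps(2) by simp
  qed
  then obtain j where j: "j < length ps" "ps ! j = y" by (metis in_set_conv_nth)
  have "j \<noteq> 0"
  proof
    assume "j = 0" then have "y = x0" using j(2) ps_eq by simp
    then show False using y(2) by simp
  qed
  moreover have "j \<noteq> 1"
  proof
    assume "j = 1" then have "y = x1" using j(2) ps_eq by simp
    then show False using yx1 by simp
  qed
  ultimately have j2: "2 \<le> j" by linarith
  define vs where "vs = take (Suc j) ps"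
  have lvs: "length vs = Suc j" unfolding vs_def using j by simp
  have "3 \<le> length vs" using lvs j2 by simp
  moreover have "distinct vs" unfolding vs_def using ps(1) unfolding is_path_def by auto
  moreover have "set vs \<subseteq> \<Union>D" unfolding vs_def using ps(1) set_take_subset unfolding is_path_def by fast
  moreover have "cycle_edges vs \<subseteq> D"
  proof
    fix e assume "e \<in> cycle_edges vs"
    then obtain i where i: "i < Suc j" "e = edge_at vs i" unfolding cycle_edges_img lvs by auto
    show "e \<in> D"
    proof (cases "i < j")
      case True
      then have "(i + 1) mod length vs = Suc i" using lvs by simp
      then have "e = {ps ! i, ps ! Suc i}" using i True unfolding edge_at_def vs_def by simp
      then show ?thesis using ps(1) j True unfolding is_path_def by auto
    next
      case False
      then have "i = j" using i by simp
      then have "(i + 1) mod length vs = 0" using lvs by simp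
      have v1: "vs ! j = y" unfolding vs_def using j by simp
      have v2: "vs ! 0 = x0" unfolding vs_def using ps_eq by simp
      have "e = {vs ! j, vs ! 0}" using i \<open>i = j\<close> \<open>(i + 1) mod length vs = 0\<close> unfolding edge_at_def by simp
      then have "e = {y, x0}" using v1 v2 by simp
      then show ?thesis using e' y by (simp add: insert_commute)
    qed
  qed
  ultimately show ?thesis by blast
qed


lemma edges_fin:
  assumes "finite V" "\<forall>e\<in>E. \<exists>u v. u \<in> V \<and> v \<in> V \<and> u \<noteq> v \<and> e = {u, v}"
  shows "finite E" "\<Union>E \<subseteq> V"
proof -
  show "\<Union>E \<subseteq> V"
  proof
    fix x assume "x \<in> \<Union>E"
    then obtain e where "e \<in> E" "x \<in> e" by auto
    then obtain u v where "u \<in> V" "v \<in> V" "e = {u, v}" using assms(2) by blast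
    then show "x \<in> V" using \<open>x \<in> e\<close> by auto
  qed
  then have "E \<subseteq> Pow V" by auto
  then show "finite E" using assms(1) finite_subset by blast
qed

lemma cyc_count:
  assumes "finite V" "\<forall>e\<in>E. \<exists>u v. u \<in> V \<and> v \<in> V \<and> u \<noteq> v \<and> e = {u, v}"
    "card V \<le> card E" "E \<noteq> {}"
  shows "\<exists>vs. 3 \<le> length vs \<and> distinct vs \<and> set vs \<subseteq> V \<and> cycle_edges vs \<subseteq> E"
  using assms
proof (induction "card V" arbitrary: V E rule: less_induct)
  case less
  have finE: "finite E" and UE: "\<Union>E \<subseteq> V" using edges_fin[OF less.prems(1,2)] by auto
  show ?case
  proof (cases "\<exists>v\<in>V. card (inc E v) \<le> 1")
    case True
    then obtain v where v: "v \<in> V" "card (inc E v) \<le> 1" by blast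
    define V' where "V' = V - {v}"
    define E' where "E' = E - inc E v"
    have cV': "card V' = card V - 1" unfolding V'_def using v less.prems(1) by simp
    have "card V > 0" using v(1) less.prems(1) card_gt_0_iff by blast
    then have cV: "card V' < card V" using cV' by linarith
    have incsub: "inc E v \<subseteq> E" unfolding inc_def by auto
    have cE': "card E' = card E - card (inc E v)" unfolding E'_def
      using card_Diff_subset[OF finite_subset[OF incsub finE] incsub] .
    have finV': "finite V'" unfolding V'_def using less.prems(1) by simp
    have two': "\<forall>e\<in>E'. \<exists>u w. u \<in> V' \<and> w \<in> V' \<and> u \<noteq> w \<and> e = {u, w}"
    proof
      fix e assume "e \<in> E'"
      then have "e \<in> E" "v \<notin> e" unfolding E'_def inc_def by auto
      then obtain u w where "u \<in> V" "w \<in> V" "u \<noteq> w" "e = {u, w}" using less.prems(2) by blast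
      then show "\<exists>u w. u \<in> V' \<and> w \<in> V' \<and> u \<noteq> w \<and> e = {u, w}"
        using \<open>v \<notin> e\<close> unfolding V'_def by auto
    qed
    have le': "card V' \<le> card E'" using cV' cE' v(2) less.prems(3) by linarith
    have ne': "E' \<noteq> {}"
    proof
      assume "E' = {}"
      then have "card E \<le> 1" using cE' v(2) by simp
      then have cV1: "card V \<le> 1" using less.prems(3) by linarith
      obtain e where "e \<in> E" using less.prems(4) by auto
      then obtain u w where uw: "u \<in> V" "w \<in> V" "u \<noteq> w" using less.prems(2) by blast
      then have "{u, w} \<subseteq> V" by auto
      then have "card {u, w} \<le> card V" using less.prems(1) card_mono by blast
      then show False using uw(3) cV1 by simp
    qed
    obtain vs where vs: "3 \<le> length vs" "distinct vs" "set vs \<subseteq> V'" "cycle_edges vs \<subseteq> E'"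
      using less.hyps[OF cV finV' two' le' ne'] by blast
    then show ?thesis unfolding V'_def E'_def by blast
  next
    case False
    have two: "\<forall>e\<in>E. \<exists>u v. u \<noteq> v \<and> e = {u, v}" using less.prems(2) by blast
    have deg: "\<forall>x\<in>\<Union>E. 2 \<le> card (inc E x)"
    proof
      fix x assume "x \<in> \<Union>E"
      then have "x \<in> V" using UE by blast
      then have "\<not> card (inc E x) \<le> 1" using False by blast
      then show "2 \<le> card (inc E x)" by linarith
    qed
    obtain vs where "3 \<le> length vs" "distinct vs" "set vs \<subseteq> \<Union>E" "cycle_edges vs \<subseteq> E"
      using cyc_mindeg[OF finE two less.prems(4) deg] by blast
    then show ?thesis using UE by blast
  qed
qed

lemma card_symdiff:
  assumes "finite A" "finite B"
  shows "card ((A - B) \<union> (B - A)) + 2 * card (A \<inter> B) = card A + card B"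
proof -
  have "card ((A - B) \<union> (B - A)) = card (A - B) + card (B - A)"
    by (rule card_Un_disjoint) (use assms in auto)
  moreover have "card (A - B) = card A - card (A \<inter> B)"
    using assms by (simp add: card_Diff_subset_Int)
  moreover have "card (B - A) = card B - card (A \<inter> B)"
    using assms by (simp add: card_Diff_subset_Int Int_commute)
  moreover have "card (A \<inter> B) \<le> card A" using assms by (simp add: card_mono)
  moreover have "card (A \<inter> B) \<le> card B" using assms by (simp add: card_mono)
  ultimately show ?thesis by linarith
qed

lemma cyc_even:
  assumes fin: "finite D" and two: "\<forall>e\<in>D. \<exists>u v. u \<noteq> v \<and> e = {u, v}"
    and ne: "D \<noteq> {}" and ev: "\<forall>x. even (card (inc D x))"
  shows "\<exists>vs. 3 \<le> length vs \<and> distinct vs \<and> set vs \<subseteq> \<Union>D \<and> cycle_edges vs \<subseteq> D"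
proof (rule cyc_mindeg[OF fin two ne])
  show "\<forall>x\<in>\<Union>D. 2 \<le> card (inc D x)"
  proof
    fix x assume "x \<in> \<Union>D"
    then have "inc D x \<noteq> {}" unfolding inc_def by auto
    moreover have "finite (inc D x)" using fin unfolding inc_def by auto
    ultimately have "card (inc D x) > 0" by (simp add: card_gt_0_iff)
    moreover have "card (inc D x) \<noteq> 1" using ev by (metis odd_one)
    ultimately show "2 \<le> card (inc D x)" by linarith
  qed
qed


lemma even_decomp:
  assumes fin: "finite D" and two: "\<forall>e\<in>D. \<exists>u v. u \<noteq> v \<and> e = {u, v}"
    and ne: "D \<noteq> {}" and evD: "even (card D)" and ev: "\<forall>x. even (card (inc D x))"
  shows "(\<exists>vs. 3 \<le> length vs \<and> distinct vs \<and> set vs \<subseteq> \<Union>D \<and> cycle_edges vs \<subseteq> D \<and> even (length vs)) \<or>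
    (\<exists>c1 c2. 3 \<le> length c1 \<and> distinct c1 \<and> set c1 \<subseteq> \<Union>D \<and> cycle_edges c1 \<subseteq> D \<and>
             3 \<le> length c2 \<and> distinct c2 \<and> set c2 \<subseteq> \<Union>D \<and> cycle_edges c2 \<subseteq> D \<and>
             odd (length c1) \<and> odd (length c2) \<and> cycle_edges c1 \<inter> cycle_edges c2 = {})"
proof -
  obtain c1 where c1: "3 \<le> length c1" "distinct c1" "set c1 \<subseteq> \<Union>D" "cycle_edges c1 \<subseteq> D"
    using cyc_even[OF fin two ne ev] by blast
  show ?thesis
  proof (cases "even (length c1)")
    case True then show ?thesis using c1 by blast
  next
    case odd1: False
    define D' where "D' = D - cycle_edges c1"
    have finD': "finite D'" unfolding D'_def using fin by simp
    have two': "\<forall>e\<in>D'. \<exists>u v. u \<noteq> v \<and> e = {u, v}" unfolding D'_def using two by blast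
    have finC: "finite (cycle_edges c1)" using finite_subset[OF c1(4) fin] .
    have "card D' = card D - card (cycle_edges c1)"
      unfolding D'_def using card_Diff_subset[OF finC c1(4)] .
    moreover have "card (cycle_edges c1) = length c1" using card_cycle_edges c1 by blast
    moreover have "card (cycle_edges c1) \<le> card D" using card_mono[OF fin c1(4)] .
    ultimately have "odd (card D')" using evD odd1 by auto
    then have ne': "D' \<noteq> {}" by auto
    have ev': "\<forall>x. even (card (inc D' x))"
    proof
      fix x
      have s: "inc (cycle_edges c1) x \<subseteq> inc D x" using c1(4) unfolding inc_def by auto
      have f: "finite (inc (cycle_edges c1) x)" using finC unfolding inc_def by auto
      have "inc D' x = inc D x - inc (cycle_edges c1) x" unfolding D'_def inc_def by auto
      then have "card (inc D' x) = card (inc D x) - card (inc (cycle_edges c1) x)"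
        using card_Diff_subset[OF f s] by simp
      moreover have "card (inc (cycle_edges c1) x) \<le> card (inc D x)"
        using card_mono[OF _ s] fin unfolding inc_def by auto
      moreover have "even (card (inc (cycle_edges c1) x))" using inc_cycle_even[OF c1(1,2)] by blast
      moreover have "even (card (inc D x))" using ev by blast
      ultimately show "even (card (inc D' x))" by auto
    qed
    obtain c2 where c2: "3 \<le> length c2" "distinct c2" "set c2 \<subseteq> \<Union>D'" "cycle_edges c2 \<subseteq> D'"
      using cyc_even[OF finD' two' ne' ev'] by blast
    have c2': "set c2 \<subseteq> \<Union>D" "cycle_edges c2 \<subseteq> D" using c2(3,4) unfolding D'_def by auto
    have disj: "cycle_edges c1 \<inter> cycle_edges c2 = {}" using c2(4) unfolding D'_def by auto
    show ?thesis
    proof (cases "even (length c2)")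
      case True then show ?thesis using c2 c2' by blast
    next
      case False then show ?thesis using c1 c2 c2' disj odd1 by blast
    qed
  qed
qed


theorem corollary8p4:
  fixes V :: "'a set" and E :: "'a set set"
  assumes "simple_graph V E"
    and "card V \<ge> 4"
    and "card E \<ge> card V + 1"
  shows "(\<exists>c. is_cycle V E c \<and> even (length c)) \<or>
         (\<exists>c1 c2. is_cycle V E c1 \<and> is_cycle V E c2 \<and> odd (length c1) \<and> odd (length c2)
                  \<and> cycle_edges c1 \<inter> cycle_edges c2 = {})"
proof -
  have finV: "finite V" and twoV: "\<forall>e\<in>E. \<exists>u v. u \<in> V \<and> v \<in> V \<and> u \<noteq> v \<and> e = {u, v}"
    using assms(1) unfolding simple_graph_def by auto
  have finE: "finite E" and UE: "\<Union>E \<subseteq> V" using edges_fin[OF finV twoV] by auto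
  have neE: "E \<noteq> {}" using assms(2,3) by auto
  obtain c where c: "3 \<le> length c" "distinct c" "set c \<subseteq> V" "cycle_edges c \<subseteq> E"
    using cyc_count[OF finV twoV _ neE] assms(3) by force
  define e where "e = edge_at c 0"
  have eC: "e \<in> cycle_edges c" unfolding e_def cycle_edges_img using c(1) by auto
  then have eE: "e \<in> E" using c(4) by auto
  define E1 where "E1 = E - {e}"
  have cE1: "card E1 = card E - 1" unfolding E1_def using eE finE by simp
  have two1: "\<forall>e\<in>E1. \<exists>u v. u \<in> V \<and> v \<in> V \<and> u \<noteq> v \<and> e = {u, v}" unfolding E1_def using twoV by blast
  have le1: "card V \<le> card E1" using cE1 assms(3) by linarith
  have ne1: "E1 \<noteq> {}" using le1 assms(2) by auto
  obtain c' where c': "3 \<le> length c'" "distinct c'" "set c' \<subseteq> V" "cycle_edges c' \<subseteq> E1"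
    using cyc_count[OF finV two1 le1 ne1] by blast
  have c'E: "cycle_edges c' \<subseteq> E" using c'(4) unfolding E1_def by auto
  have ic: "is_cycle V E c" using c is_cycle_iff by blast
  have ic': "is_cycle V E c'" using c' c'E is_cycle_iff by blast
  show ?thesis
  proof (cases "even (length c) \<or> even (length c')")
    case True then show ?thesis using ic ic' by blast
  next
    case False
    define A where "A = cycle_edges c"
    define B where "B = cycle_edges c'"
    define D where "D = (A - B) \<union> (B - A)"
    have finA: "finite A" unfolding A_def using finite_subset[OF c(4) finE] .
    have finB: "finite B" unfolding B_def using finite_subset[OF c'E finE] .
    have DE: "D \<subseteq> E" unfolding D_def A_def B_def using c(4) c'E by auto
    have finD: "finite D" using finite_subset[OF DE finE] .
    have twoD: "\<forall>e\<in>D. \<exists>u v. u \<noteq> v \<and> e = {u, v}" using DE twoV by blast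
    have "e \<notin> B" unfolding B_def using c'(4) unfolding E1_def by auto
    then have "e \<in> D" unfolding D_def A_def using eC by auto
    then have neD: "D \<noteq> {}" by auto
    have "card D + 2 * card (A \<inter> B) = card A + card B"
      unfolding D_def using card_symdiff[OF finA finB] .
    moreover have "card A = length c" unfolding A_def using card_cycle_edges c by blast
    moreover have "card B = length c'" unfolding B_def using card_cycle_edges c' by blast
    ultimately have evD: "even (card D)" using False
      by (metis dvd_add_left_iff dvd_triv_left odd_add)
    have evx: "\<forall>x. even (card (inc D x))"
    proof
      fix x
      have "inc D x = (inc A x - inc B x) \<union> (inc B x - inc A x)" unfolding D_def inc_def by auto
      moreover have "finite (inc A x)" "finite (inc B x)" using finA finB unfolding inc_def by auto
      ultimately have "card (inc D x) + 2 * card (inc A x \<inter> inc B x) = card (inc A x) + card (inc B x)"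
        using card_symdiff by metis
      moreover have "even (card (inc A x))" unfolding A_def using inc_cycle_even[OF c(1,2)] by blast
      moreover have "even (card (inc B x))" unfolding B_def using inc_cycle_even[OF c'(1,2)] by blast
      ultimately show "even (card (inc D x))"
        by (metis dvd_add_left_iff dvd_triv_left even_add)
    qed
    have UD: "\<Union>D \<subseteq> V" using DE UE by blast
    from even_decomp[OF finD twoD neD evD evx] show ?thesis
    proof
      assume "\<exists>vs. 3 \<le> length vs \<and> distinct vs \<and> set vs \<subseteq> \<Union>D \<and> cycle_edges vs \<subseteq> D \<and> even (length vs)"
      then obtain vs where "3 \<le> length vs" "distinct vs" "set vs \<subseteq> \<Union>D" "cycle_edges vs \<subseteq> D" "even (length vs)"
        by blast
      then have "is_cycle V E vs" "even (length vs)" using UD DE is_cycle_iff by blast+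
      then show ?thesis by blast
    next
      assume "\<exists>c1 c2. 3 \<le> length c1 \<and> distinct c1 \<and> set c1 \<subseteq> \<Union>D \<and> cycle_edges c1 \<subseteq> D \<and>
             3 \<le> length c2 \<and> distinct c2 \<and> set c2 \<subseteq> \<Union>D \<and> cycle_edges c2 \<subseteq> D \<and>
             odd (length c1) \<and> odd (length c2) \<and> cycle_edges c1 \<inter> cycle_edges c2 = {}"
      then obtain c1 c2 where h: "3 \<le> length c1" "distinct c1" "set c1 \<subseteq> \<Union>D" "cycle_edges c1 \<subseteq> D"
             "3 \<le> length c2" "distinct c2" "set c2 \<subseteq> \<Union>D" "cycle_edges c2 \<subseteq> D"
             "odd (length c1)" "odd (length c2)" "cycle_edges c1 \<inter> cycle_edges c2 = {}"
        by blast
      have "is_cycle V E c1" using h(1-4) UD DE is_cycle_iff by blast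
      moreover have "is_cycle V E c2" using h(5-8) UD DE is_cycle_iff by blast
      ultimately show ?thesis using h(9-11) by blast
    qed
  qed
qed

end
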